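(* There is a constant $c>0$ depending only on $d$ and $a$ (independent of $\eta$, $k$, $m$, $L$, $\bar\mu_0$) such that: (1) for every unit box $\triangle=B_k(y)$, $y\in\Omega_k$, as operators on $\mathcal L^2(\triangle)$, $$-\Delta^\eta_\triangle+\bar\mu_k+a_kQ_{\triangle,k}^*Q_{\triangle,k}\ \ge\ c\,(-\Delta^\eta_\triangle+1);$$ (2) as operators on $\mathcal L^2(\Omega)$, $$-\Delta^\eta_\Omega+\bar\mu_k+a_kQ_{\Omega,k}^*Q_{\Omega,k}\ \ge\ c\,(-\Delta^\eta_\Omega+1).$$ In particular $G_k(\Omega)$ exists as a bounded operator.
   Context: Standing setup. Fix an integer $d\ge1$, an odd integer $L>1$, integers $k\ge1$, $m\ge k$, and set $\eta=L^{-k}$. Let $\Omega=\eta\{0,1,\dots,L^m-1\}^d\subset\eta\mathbb Z^d$ and, for $0\le j\le m$, $\Omega_j=(L^j\eta)\{0,1,\dots,L^{m-j}-1\}^d$. For a finite set $O$ contained in a lattice of spacing $\epsilon$, $\mathcal L^2(O)$ denotes complex functions on $O$ with $\langle f,g\rangle=\epsilon^d\sum_{x\in O}\overline{f(x)}g(x)$. For $y\in (L^j\eta)\mathbb Z^d$ let $B_j(y)=\{x\in\eta\mathbb Z^d:\ y_\mu\le x_\mu<y_\mu+L^j\eta,\ \mu=0,\dots,d-1\}$. For a set $O$ which is a union of boxes $B_j(y)$, the averaging operator $Q_{O,j}:\mathcal L^2(O)\to\mathcal L^2(\{y: B_j(y)\subset O\})$ is $(Q_{O,j}f)(y)=L^{-jd}\sum_{x\in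 B_j(y)}f(x)$, with adjoint $(Q_{O,j}^*h)(x)=h(y_x)$, $x\in B_j(y_x)$. For a box $O=\eta(\{u_0,\dots,u_0+N-1\}\times\cdots)$ the Neumann Laplacian is $(\Delta^\eta_O f)(x)=\eta^{-2}\sum_{\mu}\big(f(x+\eta e_\mu)-2f(x)+f(x-\eta e_\mu)\big)$, where any value $f(x\pm\eta e_\mu)$ with $x\pm\eta e_\mu\notin O$ is replaced by $f(x)$. Fix $a\in(0,1]$ and set $a_j=a\frac{1-L^{-2}}{1-L^{-2j}}$. Fix $\bar\mu_0\ge0$, $\bar\mu_j=L^{2j}\bar\mu_0$. $G_k(\Omega)=(-\Delta^\eta_\Omega+\bar\mu_k+a_kQ_{\Omega,k}^*Q_{\Omega,k})^{-1}$. Operator inequalities are in the sense of quadratic forms. *)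

theory Defs
  imports "HOL-Analysis.Analysis"
begin

text \<open>Points of the fine lattice \<eta>Z^d are represented by their integer index vectors
  n :: int^'d (the physical point is \<eta> n). The dimension d is CARD('d).
  Functions in L^2(O) are functions int^'d \<Rightarrow> complex of which only the values on S matter.\<close>

definition unitv :: "'d::finite \<Rightarrow> int^'d" where
  "unitv \<mu> = (\<chi> i. if i = \<mu> then 1 else 0)"

definition ibox :: "int^'d::finite \<Rightarrow> int \<Rightarrow> (int^'d) set" where
  "ibox u N = {n. \<forall>\<mu>. u$\<mu> \<le> n$\<mu> \<and> n$\<mu> < u$\<mu> + N}"

definition lat_inner :: "real \<Rightarrow> (int^'d::finite) set \<Rightarrow> (int^'d \<Rightarrow> complex) \<Rightarrow> (int^'d \<Rightarrow> complex) \<Rightarrow> complex" where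
  "lat_inner \<epsilon> S f g = complex_of_real (\<epsilon> ^ CARD('d)) * (\<Sum>x\<in>S. cnj (f x) * g x)"

definition neumann_lap :: "real \<Rightarrow> (int^'d::finite) set \<Rightarrow> (int^'d \<Rightarrow> complex) \<Rightarrow> int^'d \<Rightarrow> complex" where
  "neumann_lap \<eta> S f x = complex_of_real (\<eta> powi (-2)) *
     (\<Sum>\<mu>\<in>UNIV. (if x + unitv \<mu> \<in> S then f (x + unitv \<mu>) else f x) - 2 * f x
                 + (if x - unitv \<mu> \<in> S then f (x - unitv \<mu>) else f x))"

text \<open>B_j(y) in index coordinates: y has index vector y (a multiple of L^j), and the
  block consists of the indices y_\<mu> \<le> x_\<mu> < y_\<mu> + L^j.\<close>
definition blockB :: "nat \<Rightarrow> nat \<Rightarrow> int^'d::finite \<Rightarrow> (int^'d) set" where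
  "blockB L j y = ibox y (int L ^ j)"

text \<open>The coarse point y_x with x \<in> B_j(y_x), y_x \<in> (L^j \<eta>)Z^d (index coordinates).\<close>
definition corner :: "nat \<Rightarrow> nat \<Rightarrow> int^'d::finite \<Rightarrow> int^'d" where
  "corner L j x = (\<chi> \<mu>. int L ^ j * (x$\<mu> div int L ^ j))"

text \<open>Averaging operator Q_{O,j}; defined (as 0) outside its domain {y. B_j(y) \<subseteq> O}.\<close>
definition avgQ :: "nat \<Rightarrow> nat \<Rightarrow> (int^'d::finite) set \<Rightarrow> (int^'d \<Rightarrow> complex) \<Rightarrow> int^'d \<Rightarrow> complex" where
  "avgQ L j S f y = (if blockB L j y \<subseteq> S
      then complex_of_real (1 / real L ^ (j * CARD('d))) * (\<Sum>x\<in>blockB L j y. f x) else 0)"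

definition adjQ :: "nat \<Rightarrow> nat \<Rightarrow> (int^'d::finite \<Rightarrow> complex) \<Rightarrow> int^'d \<Rightarrow> complex" where
  "adjQ L j h x = h (corner L j x)"

definition a_seq :: "real \<Rightarrow> nat \<Rightarrow> nat \<Rightarrow> real" where
  "a_seq a L j = a * (1 - real L powi (-2)) / (1 - real L powi (- 2 * int j))"

definition mu_seq :: "real \<Rightarrow> nat \<Rightarrow> nat \<Rightarrow> real" where
  "mu_seq \<mu>0 L j = real L ^ (2 * j) * \<mu>0"

definition opA :: "real \<Rightarrow> real \<Rightarrow> nat \<Rightarrow> nat \<Rightarrow> (int^'d::finite) set \<Rightarrow> (int^'d \<Rightarrow> complex) \<Rightarrow> int^'d \<Rightarrow> complex" where
  "opA a \<mu>0 L k S f x =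
     - neumann_lap (real L powi (- int k)) S f x + complex_of_real (mu_seq \<mu>0 L k) * f x
     + complex_of_real (a_seq a L k) * adjQ L k (avgQ L k S f) x"

definition opB :: "nat \<Rightarrow> nat \<Rightarrow> (int^'d::finite) set \<Rightarrow> (int^'d \<Rightarrow> complex) \<Rightarrow> int^'d \<Rightarrow> complex" where
  "opB L k S f x = - neumann_lap (real L powi (- int k)) S f x + f x"

text \<open>Index sets: \<Omega> = \<eta>{0,...,L^m-1}^d and unit boxes B_k(y), y = p \<in> \<Omega>_k = {0..L^{m-k}-1}^d
  (note L^k \<eta> = 1, so the index vector of y is L^k p).\<close>
definition OmegaI :: "nat \<Rightarrow> nat \<Rightarrow> (int^'d::finite) set" where
  "OmegaI L m = ibox 0 (int L ^ m)"

definition unit_box :: "nat \<Rightarrow> nat \<Rightarrow> int^'d::finite \<Rightarrow> (int^'d) set" where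
  "unit_box L k p = blockB L k (int L ^ k *s p)"

end

theory Submission
  imports Defs "HOL-Analysis.Analysis"
begin


lemma ibox_mem: "x \<in> ibox u N \<longleftrightarrow> (\<forall>\<mu>. u$\<mu> \<le> x$\<mu> \<and> x$\<mu> < u$\<mu> + N)"
  by (simp add: ibox_def)

lemma ibox_eq_image: "ibox (u::int^'d::finite) N = vec_lambda ` (PiE UNIV (\<lambda>i. {u$i..<u$i+N}))"
proof (rule set_eqI)
  fix x :: "int^'d"
  show "x \<in> ibox u N \<longleftrightarrow> x \<in> vec_lambda ` (PiE UNIV (\<lambda>i. {u$i..<u$i+N}))"
  proof
    assume "x \<in> ibox u N"
    then have "vec_nth x \<in> PiE UNIV (\<lambda>i. {u$i..<u$i+N})" by (auto simp: ibox_def)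
    then show "x \<in> vec_lambda ` (PiE UNIV (\<lambda>i. {u$i..<u$i+N}))"
      by (metis image_eqI vec_nth_inverse)
  next
    assume "x \<in> vec_lambda ` (PiE UNIV (\<lambda>i. {u$i..<u$i+N}))"
    then show "x \<in> ibox u N" by (auto simp: ibox_def PiE_def Pi_def)
  qed
qed

lemma finite_ibox[simp]: "finite (ibox (u::int^'d::finite) N)"
  unfolding ibox_eq_image by (intro finite_imageI finite_PiE) simp_all

lemma card_ibox: "card (ibox (u::int^'d::finite) N) = nat N ^ CARD('d)"
proof -
  have "inj_on vec_lambda (PiE UNIV (\<lambda>i. {u$i..<u$i+N}))"
    by (rule inj_onI) simp
  then have "card (ibox u N) = card (PiE UNIV (\<lambda>i::'d. {u$i..<u$i+N}))"
    unfolding ibox_eq_image by (rule card_image)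
  also have "\<dots> = (\<Prod>i\<in>(UNIV::'d set). card {u$i..<u$i+N})" by (simp add: card_PiE)
  also have "\<dots> = nat N ^ CARD('d)" by simp
  finally show ?thesis .
qed




definition setc :: "int^'d::finite \<Rightarrow> 'd \<Rightarrow> int \<Rightarrow> int^'d" where
  "setc z j s = (\<chi> i. if i = j then s else z$i)"

definition hb :: "(int^'d::finite) set \<Rightarrow> (int^'d \<Rightarrow> complex) \<Rightarrow> 'd \<Rightarrow> int^'d \<Rightarrow> real" where
  "hb S f j x = (if x + unitv j \<in> S then (cmod (f (x + unitv j) - f x))^2 else 0)"

definition En :: "(int^'d::finite) set \<Rightarrow> (int^'d \<Rightarrow> complex) \<Rightarrow> real" where
  "En S f = (\<Sum>j\<in>UNIV. \<Sum>x\<in>S. hb S f j x)"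

definition Lj :: "int^'d::finite \<Rightarrow> int \<Rightarrow> (int^'d \<Rightarrow> complex) \<Rightarrow> 'd \<Rightarrow> int^'d \<Rightarrow> real" where
  "Lj u N f j z = (\<Sum>s\<in>{u$j..<u$j+N}. hb (ibox u N) f j (setc z j s))"

lemma hb_nonneg: "hb S f j x \<ge> 0" by (simp add: hb_def)

lemma En_nonneg: "En S f \<ge> 0" unfolding En_def by (intro sum_nonneg hb_nonneg)

lemma setc_nth[simp]: "setc z j s $ i = (if i = j then s else z$i)"
  by (simp add: setc_def)

lemma setc_setc[simp]: "setc (setc z j s) j t = setc z j t"
  by (simp add: vec_eq_iff)

lemma setc_same[simp]: "setc z j (z$j) = z"
  by (simp add: vec_eq_iff)

lemma setc_plus: "setc z j s + unitv j = setc z j (s+1)"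
  by (simp add: vec_eq_iff unitv_def)

lemma setc_mem: "z \<in> ibox u N \<Longrightarrow> s \<in> {u$j..<u$j+N} \<Longrightarrow> setc z j s \<in> ibox u N"
  by (auto simp: ibox_def)

lemma Lj_setc[simp]: "Lj u N f j (setc z j t) = Lj u N f j z"
  by (simp add: Lj_def)

lemma line_bound_aux:
  assumes z: "z \<in> ibox u N" and s0: "s0 \<in> {u$j..<u$j+N}" and t: "t \<in> {u$j..<u$j+N}"
    and le: "s0 \<le> t"
  shows "(cmod (f (setc z j t) - f (setc z j s0)))^2 \<le> of_int N * Lj u N f j z"
proof -
  define n where "n = nat (t - s0)"
  have tn: "t = s0 + int n" using le by (simp add: n_def)
  define g where "g i = f (setc z j (s0 + int i))" for i
  define d where "d i = g (Suc i) - g i" for i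
  have tel: "f (setc z j t) - f (setc z j s0) = (\<Sum>i<n. d i)"
  proof -
    have "(\<Sum>i<n. d i) = g n - g 0" unfolding d_def by (rule sum_lessThan_telescope)
    then show ?thesis by (simp add: g_def tn)
  qed
  have hbd: "hb (ibox u N) f j (setc z j (s0 + int i)) = (cmod (d i))^2" if "i < n" for i
  proof -
    have "setc z j (s0 + int i) + unitv j = setc z j (s0 + int (Suc i))"
      using setc_plus[of z j "s0 + int i"] by (simp add: ac_simps)
    moreover have "setc z j (s0 + int (Suc i)) \<in> ibox u N"
    proof (rule setc_mem[OF z])
      have "s0 + int (Suc i) \<le> t" using tn that by simp
      then show "s0 + int (Suc i) \<in> {u$j..<u$j+N}" using s0 t by simp
    qed
    ultimately show ?thesis by (simp add: hb_def d_def g_def)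
  qed
  have "cmod (\<Sum>i<n. d i) \<le> (\<Sum>i<n. cmod (d i))" by (rule norm_sum)
  then have "(cmod (\<Sum>i<n. d i))^2 \<le> (\<Sum>i<n. cmod (d i))^2"
    by (simp add: power_mono)
  also have "\<dots> \<le> (\<Sum>i<n. (cmod (d i))^2) * card {..<n}"
    by (rule sum_squared_le_sum_of_squares)
  also have "\<dots> = real n * (\<Sum>i<n. hb (ibox u N) f j (setc z j (s0 + int i)))"
  proof -
    have "(\<Sum>i<n. (cmod (d i))^2) = (\<Sum>i<n. hb (ibox u N) f j (setc z j (s0 + int i)))"
      by (rule sum.cong[OF refl]) (simp add: hbd)
    then show ?thesis by (simp only: card_lessThan mult.commute)
  qed
  also have "\<dots> \<le> of_int N * Lj u N f j z"
  proof (rule mult_mono)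
    show "real n \<le> (of_int N::real)" using s0 t tn by auto
    have "(\<Sum>i<n. hb (ibox u N) f j (setc z j (s0 + int i)))
        = (\<Sum>s\<in>(\<lambda>i. s0 + int i) ` {..<n}. hb (ibox u N) f j (setc z j s))"
      by (subst sum.reindex) (auto simp: inj_on_def)
    also have "\<dots> \<le> Lj u N f j z"
      unfolding Lj_def
      by (rule sum_mono2) (use s0 t tn in \<open>auto simp: hb_nonneg\<close>)
    finally show "(\<Sum>i<n. hb (ibox u N) f j (setc z j (s0 + int i))) \<le> Lj u N f j z" .
    show "0 \<le> (of_int N::real)" using s0 by auto
    show "0 \<le> (\<Sum>i<n. hb (ibox u N) f j (setc z j (s0 + int i)))" by (intro sum_nonneg hb_nonneg)
  qed
  finally show ?thesis unfolding tel .
qed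

lemma line_bound:
  assumes z: "z \<in> ibox u N" and t: "t \<in> {u$j..<u$j+N}"
  shows "(cmod (f z - f (setc z j t)))^2 \<le> of_int N * Lj u N f j z"
proof -
  have "u$j \<le> z$j \<and> z$j < u$j + N" using z unfolding ibox_def by blast
  then have zj: "z$j \<in> {u$j..<u$j+N}" by simp
  have sw: "cmod (f z - f (setc z j t)) = cmod (f (setc z j t) - f z)" by (rule norm_minus_commute)
  have ss: "setc z j (z$j) = z" by (rule setc_same)
  show ?thesis
  proof (cases "z$j \<le> t")
    case True
    have A: "(cmod (f (setc z j t) - f (setc z j (z$j))))^2 \<le> of_int N * Lj u N f j z"
      by (rule line_bound_aux[OF z zj t True])
    show ?thesis using A unfolding sw ss .
  next
    case False
    then have le: "t \<le> z$j" by simp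
    have w: "setc z j t \<in> ibox u N" by (rule setc_mem[OF z t])
    have A: "(cmod (f (setc (setc z j t) j (z$j)) - f (setc (setc z j t) j t)))^2 \<le> of_int N * Lj u N f j (setc z j t)"
      by (rule line_bound_aux[OF w t zj le])
    show ?thesis using A unfolding setc_setc ss Lj_setc .
  qed
qed




definition mix :: "'d::finite set \<Rightarrow> int^'d \<Rightarrow> int^'d \<Rightarrow> int^'d" where
  "mix J x y = (\<chi> i. if i \<in> J then y$i else x$i)"

lemma mix_nth[simp]: "mix J x y $ i = (if i \<in> J then y$i else x$i)"
  by (simp add: mix_def)

lemma mix_mem: "x \<in> ibox u N \<Longrightarrow> y \<in> ibox u N \<Longrightarrow> mix J x y \<in> ibox u N"
  by (auto simp: ibox_def)

lemma mix_inv1[simp]: "mix J (mix J x y) (mix J y x) = x" by (simp add: vec_eq_iff)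
lemma mix_inv2[simp]: "mix J (mix J y x) (mix J x y) = y" by (simp add: vec_eq_iff)
lemma mix_UNIV[simp]: "mix UNIV x y = y" by (simp add: vec_eq_iff)
lemma mix_empty[simp]: "mix {} x y = x" by (simp add: vec_eq_iff)
lemma mix_insert: "mix (insert j J) x y = setc (mix J x y) j (y$j)" by (simp add: vec_eq_iff)

lemma sum_mix:
  fixes g :: "int^'d::finite \<Rightarrow> real"
  shows "(\<Sum>x\<in>ibox u N. \<Sum>y\<in>ibox u N. g (mix J x y)) = real (card (ibox u N)) * (\<Sum>z\<in>ibox u N. g z)"
proof -
  let ?B = "ibox u N"
  have "(\<Sum>x\<in>?B. \<Sum>y\<in>?B. g (mix J x y)) = (\<Sum>p\<in>?B \<times> ?B. g (mix J (fst p) (snd p)))"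
    by (simp add: sum.cartesian_product split_def)
  also have "\<dots> = (\<Sum>p\<in>?B \<times> ?B. g (fst p))"
    by (rule sum.reindex_bij_witness[where i="\<lambda>p. (mix J (fst p) (snd p), mix J (snd p) (fst p))"
          and j="\<lambda>p. (mix J (fst p) (snd p), mix J (snd p) (fst p))"]) (auto simp: mix_mem)
  also have "\<dots> = real (card ?B) * (\<Sum>z\<in>?B. g z)"
    by (simp add: sum.cartesian_product' sum_distrib_left)
  finally show ?thesis .
qed

lemma sum_line:
  fixes h :: "int^'d::finite \<Rightarrow> real"
  shows "(\<Sum>z\<in>ibox u N. \<Sum>s\<in>{u$j..<u$j+N}. h (setc z j s)) = real (nat N) * (\<Sum>z\<in>ibox u N. h z)"
proof -
  let ?B = "ibox u N" and ?I = "{u$j..<u$j+N}"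
  have "(\<Sum>z\<in>?B. \<Sum>s\<in>?I. h (setc z j s)) = (\<Sum>p\<in>?B \<times> ?I. h (setc (fst p) j (snd p)))"
    by (simp add: sum.cartesian_product split_def)
  also have "\<dots> = (\<Sum>p\<in>?B \<times> ?I. h (fst p))"
    by (rule sum.reindex_bij_witness[where i="\<lambda>p. (setc (fst p) j (snd p), fst p $ j)"
          and j="\<lambda>p. (setc (fst p) j (snd p), fst p $ j)"]) (auto simp: setc_mem ibox_def)
  also have "\<dots> = real (nat N) * (\<Sum>z\<in>?B. h z)"
    by (simp add: sum.cartesian_product' sum_distrib_left)
  finally show ?thesis .
qed

lemma tri2: "(cmod (a - c))^2 \<le> 2 * (cmod (a - b))^2 + 2 * (cmod (b - c))^2"
proof -
  let ?p = "cmod (a - b)" and ?q = "cmod (b - c)"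
  have "cmod (a - c) \<le> ?p + ?q" using norm_triangle_ineq[of "a - b" "b - c"] by simp
  then have "(cmod (a - c))^2 \<le> (?p + ?q)^2" by (simp add: power_mono)
  also have "(?p + ?q)^2 = ?p^2 + ?q^2 + 2 * ?p * ?q" by (simp add: power2_eq_square algebra_simps)
  finally show ?thesis using sum_squares_bound[of ?p ?q] by linarith
qed

lemma hb_le_En: "(\<Sum>z\<in>S. hb S f j z) \<le> En S f"
  unfolding En_def
  by (rule member_le_sum[of j UNIV "\<lambda>j. \<Sum>z\<in>S. hb S f j z"]) (auto intro: sum_nonneg hb_nonneg)

lemma poinc_J:
  fixes f :: "int^'d::finite \<Rightarrow> complex"
  assumes "finite J" and N: "N > 0"
  shows "(\<Sum>x\<in>ibox u N. \<Sum>y\<in>ibox u N. (cmod (f x - f (mix J x y)))^2)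
     \<le> 4 ^ card J * ((of_int N)^2 * real (card (ibox u N)) * En (ibox u N) f)"
  using assms(1)
proof (induction J rule: finite_induct)
  case empty
  then show ?case by (simp add: En_nonneg)
next
  case (insert j J)
  let ?B = "ibox u N"
  let ?X = "(of_int N)^2 * real (card ?B) * En ?B f"
  have X0: "?X \<ge> 0" by (intro mult_nonneg_nonneg) (auto simp: En_nonneg)
  let ?T = "\<Sum>x\<in>?B. \<Sum>y\<in>?B. (cmod (f (mix J x y) - f (setc (mix J x y) j (y$j))))^2"
  have "?T \<le> (\<Sum>x\<in>?B. \<Sum>y\<in>?B. of_int N * Lj u N f j (mix J x y))"
    by (intro sum_mono line_bound mix_mem) (auto simp: ibox_def)
  also have "\<dots> = of_int N * (real (card ?B) * (\<Sum>z\<in>?B. Lj u N f j z))"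
    by (simp add: sum_mix flip: sum_distrib_left)
  also have "(\<Sum>z\<in>?B. Lj u N f j z) = of_int N * (\<Sum>z\<in>?B. hb ?B f j z)"
    unfolding Lj_def using sum_line[where h="hb ?B f j" and u=u and N=N and j=j] N by simp
  also have "of_int N * (real (card ?B) * (of_int N * (\<Sum>z\<in>?B. hb ?B f j z))) \<le> ?X"
  proof -
    have "(\<Sum>z\<in>?B. hb ?B f j z) \<le> En ?B f" by (rule hb_le_En)
    then have "(of_int N)^2 * real (card ?B) * (\<Sum>z\<in>?B. hb ?B f j z) \<le> ?X"
      using N by (intro mult_left_mono) auto
    then show ?thesis by (simp add: power2_eq_square ac_simps)
  qed
  finally have T: "?T \<le> ?X" .
  have "(\<Sum>x\<in>?B. \<Sum>y\<in>?B. (cmod (f x - f (mix (insert j J) x y)))^2)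
     \<le> (\<Sum>x\<in>?B. \<Sum>y\<in>?B. 2 * (cmod (f x - f (mix J x y)))^2 + 2 * (cmod (f (mix J x y) - f (setc (mix J x y) j (y$j))))^2)"
    unfolding mix_insert by (intro sum_mono tri2)
  also have "\<dots> = 2 * (\<Sum>x\<in>?B. \<Sum>y\<in>?B. (cmod (f x - f (mix J x y)))^2) + 2 * ?T"
    by (simp add: sum.distrib sum_distrib_left)
  also have "\<dots> \<le> 2 * (4 ^ card J * ?X) + 2 * ?X"
    using insert.IH T by linarith
  also have "\<dots> \<le> 4 ^ card (insert j J) * ?X"
  proof -
    have "(1::real) \<le> 4 ^ card J" by simp
    then have "1 * ?X \<le> 4 ^ card J * ?X" using X0 by (rule mult_right_mono)
    then have "2 * (4 ^ card J * ?X) + 2 * ?X \<le> 4 * (4 ^ card J * ?X)" by linarith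
    then show ?thesis using insert.hyps by (simp add: mult.assoc)
  qed
  finally show ?case .
qed

lemma sq_identity:
  fixes f :: "int^'d::finite \<Rightarrow> complex" and B :: "(int^'d) set"
  shows "(\<Sum>x\<in>B. \<Sum>y\<in>B. (cmod (f x - f y))^2)
       = 2 * real (card B) * (\<Sum>x\<in>B. (cmod (f x))^2) - 2 * (cmod (\<Sum>x\<in>B. f x))^2"
proof -
  have e: "(cmod (a - b))^2 = (cmod a)^2 + (cmod b)^2 - 2 * Re (cnj a * b)" for a b :: complex
    unfolding cmod_power2 by (simp add: power2_eq_square algebra_simps)
  have r: "(\<Sum>x\<in>B. \<Sum>y\<in>B. Re (cnj (f x) * f y)) = (cmod (\<Sum>x\<in>B. f x))^2"
  proof -
    have "(\<Sum>x\<in>B. \<Sum>y\<in>B. Re (cnj (f x) * f y)) = Re (\<Sum>x\<in>B. \<Sum>y\<in>B. cnj (f x) * f y)"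
      by (simp add: Re_sum)
    also have "(\<Sum>x\<in>B. \<Sum>y\<in>B. cnj (f x) * f y) = cnj (\<Sum>x\<in>B. f x) * (\<Sum>x\<in>B. f x)"
      by (simp add: sum_product cnj_sum)
    also have "Re (cnj (\<Sum>x\<in>B. f x) * (\<Sum>x\<in>B. f x)) = (cmod (\<Sum>x\<in>B. f x))^2"
    proof -
      have "cnj (\<Sum>x\<in>B. f x) * (\<Sum>x\<in>B. f x) = complex_of_real ((cmod (\<Sum>x\<in>B. f x))^2)"
        by (simp only: complex_norm_square mult.commute)
      then show ?thesis by (simp only: Re_complex_of_real)
    qed
    finally show ?thesis .
  qed
  have "(\<Sum>x\<in>B. \<Sum>y\<in>B. (cmod (f x - f y))^2)
     = (\<Sum>x\<in>B. \<Sum>y\<in>B. (cmod (f x))^2 + (cmod (f y))^2 - 2 * Re (cnj (f x) * f y))"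
    by (simp add: e)
  also have "\<dots> = (\<Sum>x\<in>B. \<Sum>y\<in>B. (cmod (f x))^2) + (\<Sum>x\<in>B. \<Sum>y\<in>B. (cmod (f y))^2)
      - 2 * (\<Sum>x\<in>B. \<Sum>y\<in>B. Re (cnj (f x) * f y))"
    by (simp only: sum.distrib sum_subtractf sum_distrib_left[symmetric])
  also have "(\<Sum>x\<in>B. \<Sum>y\<in>B. (cmod (f x))^2) = real (card B) * (\<Sum>x\<in>B. (cmod (f x))^2)"
    by (simp add: sum_distrib_left)
  also have "(\<Sum>x\<in>B. \<Sum>y\<in>B. (cmod (f y))^2) = real (card B) * (\<Sum>x\<in>B. (cmod (f x))^2)"
    by simp
  finally show ?thesis using r by linarith
qed

lemma poincare:
  fixes f :: "int^'d::finite \<Rightarrow> complex"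
  assumes N: "N > 0"
  shows "2 * real (card (ibox u N)) * (\<Sum>x\<in>ibox u N. (cmod (f x))^2) - 2 * (cmod (\<Sum>x\<in>ibox u N. f x))^2
     \<le> 4 ^ CARD('d) * ((of_int N)^2 * real (card (ibox u N)) * En (ibox u N) f)"
proof -
  have "(\<Sum>x\<in>ibox u N. \<Sum>y\<in>ibox u N. (cmod (f x - f (mix UNIV x y)))^2)
     \<le> 4 ^ card (UNIV::'d set) * ((of_int N)^2 * real (card (ibox u N)) * En (ibox u N) f)"
    by (rule poinc_J[OF _ N]) simp
  then have "(\<Sum>x\<in>ibox u N. \<Sum>y\<in>ibox u N. (cmod (f x - f y))^2)
     \<le> 4 ^ CARD('d) * ((of_int N)^2 * real (card (ibox u N)) * En (ibox u N) f)"
    by (simp only: mix_UNIV)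
  then show ?thesis by (simp only: sq_identity)
qed




lemma shift_sum:
  fixes G :: "int^'d::finite \<Rightarrow> int^'d \<Rightarrow> complex"
  assumes "finite S"
  shows "(\<Sum>x\<in>S. if x - e \<in> S then G x (x - e) else 0) = (\<Sum>y\<in>S. if y + e \<in> S then G (y + e) y else 0)"
proof -
  have "(\<Sum>x\<in>S. if x - e \<in> S then G x (x - e) else 0) = (\<Sum>x\<in>{x\<in>S. x - e \<in> S}. G x (x - e))"
    using assms by (simp add: sum.inter_filter)
  also have "\<dots> = (\<Sum>y\<in>{y\<in>S. y + e \<in> S}. G (y + e) y)"
    by (rule sum.reindex_bij_witness[where i="\<lambda>y. y + e" and j="\<lambda>x. x - e"]) auto
  also have "\<dots> = (\<Sum>y\<in>S. if y + e \<in> S then G (y + e) y else 0)"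
    using assms by (simp add: sum.inter_filter)
  finally show ?thesis .
qed

lemma lap_form:
  fixes f :: "int^'d::finite \<Rightarrow> complex"
  assumes S: "finite S"
  shows "(\<Sum>x\<in>S. cnj (f x) * neumann_lap \<eta> S f x) = - complex_of_real (\<eta> powi (-2)) * complex_of_real (En S f)"
proof -
  define A where "A \<mu> x = (if x + unitv \<mu> \<in> S then f (x + unitv \<mu>) - f x else 0)" for \<mu> x
  define Bm where "Bm \<mu> x = (if x - unitv \<mu> \<in> S then f (x - unitv \<mu>) - f x else 0)" for \<mu> x
  have lap: "neumann_lap \<eta> S f x = complex_of_real (\<eta> powi (-2)) * (\<Sum>\<mu>\<in>UNIV. A \<mu> x + Bm \<mu> x)" for x
    unfolding neumann_lap_def A_def Bm_def by (intro arg_cong2[where f="(*)"] refl sum.cong) auto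
  have per: "(\<Sum>x\<in>S. cnj (f x) * A \<mu> x) + (\<Sum>x\<in>S. cnj (f x) * Bm \<mu> x) = - complex_of_real (\<Sum>x\<in>S. hb S f \<mu> x)" for \<mu>
  proof -
    have "(\<Sum>x\<in>S. cnj (f x) * Bm \<mu> x) = (\<Sum>x\<in>S. if x - unitv \<mu> \<in> S then cnj (f x) * (f (x - unitv \<mu>) - f x) else 0)"
      unfolding Bm_def by (intro sum.cong) auto
    also have "\<dots> = (\<Sum>y\<in>S. if y + unitv \<mu> \<in> S then cnj (f (y + unitv \<mu>)) * (f y - f (y + unitv \<mu>)) else 0)"
      by (rule shift_sum[OF S, where e="unitv \<mu>" and G="\<lambda>x w. cnj (f x) * (f w - f x)"])
    finally have b: "(\<Sum>x\<in>S. cnj (f x) * Bm \<mu> x) = \<dots>" .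
    have pt: "cnj (f x) * A \<mu> x + (if x + unitv \<mu> \<in> S then cnj (f (x + unitv \<mu>)) * (f x - f (x + unitv \<mu>)) else 0)
        = - complex_of_real (hb S f \<mu> x)" for x
    proof (cases "x + unitv \<mu> \<in> S")
      case True
      let ?a = "f x" and ?b = "f (x + unitv \<mu>)"
      have "cnj ?a * (?b - ?a) + cnj ?b * (?a - ?b) = - ((?b - ?a) * cnj (?b - ?a))"
        by (simp add: algebra_simps)
      also have "(?b - ?a) * cnj (?b - ?a) = complex_of_real ((cmod (?b - ?a))^2)"
        by (rule complex_norm_square[symmetric])
      finally show ?thesis using True by (simp add: A_def hb_def)
    qed (simp add: A_def hb_def)
    show ?thesis
      unfolding b by (simp add: pt flip: sum.distrib sum_negf)
  qed
  have "(\<Sum>x\<in>S. cnj (f x) * neumann_lap \<eta> S f x)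
      = complex_of_real (\<eta> powi (-2)) * (\<Sum>\<mu>\<in>UNIV. (\<Sum>x\<in>S. cnj (f x) * A \<mu> x) + (\<Sum>x\<in>S. cnj (f x) * Bm \<mu> x))"
  proof -
    let ?w = "complex_of_real (\<eta> powi (-2))"
    have "(\<Sum>x\<in>S. cnj (f x) * neumann_lap \<eta> S f x) = (\<Sum>x\<in>S. ?w * (\<Sum>\<mu>\<in>UNIV. cnj (f x) * (A \<mu> x + Bm \<mu> x)))"
      unfolding lap by (intro sum.cong refl) (simp add: sum_distrib_left ac_simps)
    also have "\<dots> = ?w * (\<Sum>x\<in>S. \<Sum>\<mu>\<in>UNIV. cnj (f x) * (A \<mu> x + Bm \<mu> x))"
      by (simp only: sum_distrib_left)
    also have "(\<Sum>x\<in>S. \<Sum>\<mu>\<in>UNIV. cnj (f x) * (A \<mu> x + Bm \<mu> x)) = (\<Sum>\<mu>\<in>UNIV. \<Sum>x\<in>S. cnj (f x) * (A \<mu> x + Bm \<mu> x))"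
      by (rule sum.swap)
    also have "\<dots> = (\<Sum>\<mu>\<in>UNIV. (\<Sum>x\<in>S. cnj (f x) * A \<mu> x) + (\<Sum>x\<in>S. cnj (f x) * Bm \<mu> x))"
      by (simp only: distrib_left sum.distrib)
    finally show ?thesis .
  qed
  also have "\<dots> = - complex_of_real (\<eta> powi (-2)) * complex_of_real (En S f)"
    by (simp add: per En_def sum_negf)
  finally show ?thesis .
qed

lemma norm_form: "(\<Sum>x\<in>S. cnj (f x) * f x) = complex_of_real (\<Sum>x\<in>S. (cmod (f x))^2)"
proof -
  have "cnj (f x) * f x = complex_of_real ((cmod (f x))^2)" for x
    by (subst complex_norm_square) (rule mult.commute)
  then show ?thesis by (simp only: of_real_sum)
qed

lemma Re_helperA:
  fixes w E m X a c :: real and Z Q :: complex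
  assumes "Z = - (- complex_of_real w * complex_of_real E) + complex_of_real m * complex_of_real X + complex_of_real a * Q"
  shows "Re (complex_of_real c * Z) = c * (w * E + m * X + a * Re Q)"
  using assms by (simp add: algebra_simps)

lemma Re_helperB:
  fixes w E X c :: real and Z :: complex
  assumes "Z = - (- complex_of_real w * complex_of_real E) + complex_of_real X"
  shows "Re (complex_of_real c * Z) = c * (w * E + X)"
  using assms by (simp add: algebra_simps)

lemma form_opA:
  fixes f :: "int^'d::finite \<Rightarrow> complex"
  assumes S: "finite S"
  shows "Re (lat_inner (real L powi (- int k)) S f (opA a \<mu>0 L k S f))
    = (real L powi (- int k)) ^ CARD('d) * ((real L powi (- int k)) powi (-2) * En S f
        + mu_seq \<mu>0 L k * (\<Sum>x\<in>S. (cmod (f x))^2)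
        + a_seq a L k * Re (\<Sum>x\<in>S. cnj (f x) * adjQ L k (avgQ L k S f) x))"
proof -
  have "(\<Sum>x\<in>S. cnj (f x) * opA a \<mu>0 L k S f x)
     = - (\<Sum>x\<in>S. cnj (f x) * neumann_lap (real L powi (- int k)) S f x)
       + complex_of_real (mu_seq \<mu>0 L k) * (\<Sum>x\<in>S. cnj (f x) * f x)
       + complex_of_real (a_seq a L k) * (\<Sum>x\<in>S. cnj (f x) * adjQ L k (avgQ L k S f) x)"
  proof -
    have "(\<Sum>x\<in>S. cnj (f x) * opA a \<mu>0 L k S f x) = (\<Sum>x\<in>S. - (cnj (f x) * neumann_lap (real L powi (- int k)) S f x)
       + complex_of_real (mu_seq \<mu>0 L k) * (cnj (f x) * f x)
       + complex_of_real (a_seq a L k) * (cnj (f x) * adjQ L k (avgQ L k S f) x))"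
      unfolding opA_def by (intro sum.cong refl) (simp add: algebra_simps)
    then show ?thesis by (simp only: sum.distrib sum_negf sum_distrib_left)
  qed
  then have "(\<Sum>x\<in>S. cnj (f x) * opA a \<mu>0 L k S f x)
     = - (- complex_of_real ((real L powi (- int k)) powi (-2)) * complex_of_real (En S f))
       + complex_of_real (mu_seq \<mu>0 L k) * complex_of_real (\<Sum>x\<in>S. (cmod (f x))^2)
       + complex_of_real (a_seq a L k) * (\<Sum>x\<in>S. cnj (f x) * adjQ L k (avgQ L k S f) x)"
    by (simp only: lap_form[OF S] norm_form)
  then show ?thesis
    unfolding lat_inner_def by (rule Re_helperA)
qed

lemma form_opB:
  fixes f :: "int^'d::finite \<Rightarrow> complex"
  assumes S: "finite S"
  shows "Re (lat_inner (real L powi (- int k)) S f (opB L k S f))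
    = (real L powi (- int k)) ^ CARD('d) * ((real L powi (- int k)) powi (-2) * En S f
        + (\<Sum>x\<in>S. (cmod (f x))^2))"
proof -
  have "(\<Sum>x\<in>S. cnj (f x) * opB L k S f x)
     = - (\<Sum>x\<in>S. cnj (f x) * neumann_lap (real L powi (- int k)) S f x)
       + (\<Sum>x\<in>S. cnj (f x) * f x)"
  proof -
    have "(\<Sum>x\<in>S. cnj (f x) * opB L k S f x) = (\<Sum>x\<in>S. - (cnj (f x) * neumann_lap (real L powi (- int k)) S f x)
       + cnj (f x) * f x)"
      unfolding opB_def by (intro sum.cong refl) (simp add: algebra_simps)
    then show ?thesis by (simp only: sum.distrib sum_negf)
  qed
  then have "(\<Sum>x\<in>S. cnj (f x) * opB L k S f x)
     = - (- complex_of_real ((real L powi (- int k)) powi (-2)) * complex_of_real (En S f))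
       + complex_of_real (\<Sum>x\<in>S. (cmod (f x))^2)"
    by (simp only: lap_form[OF S] norm_form)
  then show ?thesis
    unfolding lat_inner_def by (rule Re_helperB)
qed




lemma eta_eq: "(L::nat) > 0 \<Longrightarrow> real L powi (- int k) = 1 / real L ^ k"
  by (simp add: power_int_minus power_int_of_nat divide_inverse)

lemma eta_m2: "(L::nat) > 0 \<Longrightarrow> (real L powi (- int k)) powi (-2) = (real L ^ k)^2"
proof -
  assume L: "L > 0"
  have "(real L powi (- int k)) powi (-2) = (1 / real L ^ k) powi (-2)" by (simp add: eta_eq[OF L])
  also have "\<dots> = inverse ((1 / real L ^ k)^2)"
    by (simp add: power_int_minus power_int_of_nat)
  also have "\<dots> = (real L ^ k)^2" using L by (simp add: field_simps)
  finally show ?thesis .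
qed

lemma a_seq_lb:
  assumes L: "(L::nat) \<ge> 3" and k: "k \<ge> 1" and a: "a > 0"
  shows "a_seq a L k \<ge> 8 * a / 9"
proof -
  have L0: "real L \<ge> 3" using L by simp
  have e1: "real L powi (-2) = 1 / (real L)^2"
    by (simp add: power_int_minus power_int_of_nat divide_inverse)
  have e2: "real L powi (- 2 * int k) = 1 / (real L)^(2*k)"
  proof -
    have "- 2 * int k = - int (2*k)" by simp
    then have "real L powi (- 2 * int k) = inverse (real L powi (int (2*k)))"
      by (simp only: power_int_minus)
    also have "real L powi (int (2*k)) = real L ^ (2*k)" by (rule power_int_of_nat)
    finally show ?thesis by (simp add: divide_inverse)
  qed
  have "(real L)^2 \<ge> 9" using L0 power_mono[OF L0, of 2] by simp
  then have t1: "1 / (real L)^2 \<le> 1/9" using L by (intro divide_left_mono) auto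
  have "(real L)^(2*k) \<ge> (real L)^2" using L0 k by (intro power_increasing) auto
  then have p2: "(real L)^(2*k) > 1" using \<open>(real L)^2 \<ge> 9\<close> by linarith
  then have "1 / (real L)^(2*k) < 1" by (simp add: divide_less_eq)
  moreover have "1 / (real L)^(2*k) \<ge> 0" by simp
  ultimately have t2: "0 < 1 - 1 / (real L)^(2*k)" "1 - 1 / (real L)^(2*k) \<le> 1" by linarith+
  have num: "a * (1 - 1 / (real L)^2) \<ge> a * (8/9)" using t1 a by (intro mult_left_mono) auto
  have "a * (1 - 1 / (real L)^2) / (1 - 1 / (real L)^(2*k)) \<ge> a * (1 - 1 / (real L)^2)"
  proof -
    have "a * (1 - 1 / (real L)^2) \<ge> 0" using num a by linarith
    then show ?thesis using t2 by (simp add: le_divide_eq mult_left_le)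
  qed
  then show ?thesis unfolding a_seq_def e1 e2 using num by linarith
qed

lemma mu_seq_nonneg: "\<mu>0 \<ge> 0 \<Longrightarrow> mu_seq \<mu>0 L k \<ge> 0"
  by (simp add: mu_seq_def)

lemma smult_nth: "((c::int) *s p) $ i = c * p $ i" by simp

lemma box_iff_div:
  assumes N: "(N::int) > 0"
  shows "x \<in> ibox (N *s p) N \<longleftrightarrow> (\<forall>\<mu>. x$\<mu> div N = p$\<mu>)"
proof
  assume "x \<in> ibox (N *s p) N"
  then have h: "N * p$\<mu> \<le> x$\<mu> \<and> x$\<mu> < N * p$\<mu> + N" for \<mu> by (simp add: ibox_def)
  show "\<forall>\<mu>. x$\<mu> div N = p$\<mu>"
  proof
    fix \<mu>
    show "x$\<mu> div N = p$\<mu>"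
      by (rule int_div_pos_eq[of _ N _ "x$\<mu> - N * p$\<mu>"]) (use h[of \<mu>] in auto)
  qed
next
  assume h: "\<forall>\<mu>. x$\<mu> div N = p$\<mu>"
  have "N * p$\<mu> \<le> x$\<mu> \<and> x$\<mu> < N * p$\<mu> + N" for \<mu>
  proof -
    have d: "x$\<mu> = N * (x$\<mu> div N) + x$\<mu> mod N" by simp
    have "0 \<le> x$\<mu> mod N" "x$\<mu> mod N < N" using N by simp_all
    then show ?thesis using d h by (metis add.commute add_le_cancel_left add_less_cancel_left le_add_same_cancel2)
  qed
  then show "x \<in> ibox (N *s p) N" by (simp add: ibox_def)
qed




lemma unit_box_eq: "unit_box L k p = ibox (int L ^ k *s p) (int L ^ k)"
  by (simp add: unit_box_def blockB_def)

lemma corner_box: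
  assumes L: "L > 0" and x: "x \<in> unit_box L k p"
  shows "corner L k x = int L ^ k *s p"
proof -
  have N: "int L ^ k > 0" using L by simp
  have "\<forall>\<mu>. x$\<mu> div int L ^ k = p$\<mu>" using x unfolding unit_box_eq box_iff_div[OF N] .
  then show ?thesis by (simp add: corner_def vec_eq_iff)
qed

lemma adjQ_box:
  fixes f :: "int^'d::finite \<Rightarrow> complex"
  assumes L: "L > 0" and sub: "unit_box L k p \<subseteq> S" and x: "x \<in> unit_box L k p"
  shows "adjQ L k (avgQ L k S f) x = complex_of_real (1 / real L ^ (k * CARD('d))) * (\<Sum>y\<in>unit_box L k p. f y)"
proof -
  have b: "blockB L k (int L ^ k *s p) = unit_box L k p" by (simp add: unit_box_def)
  show ?thesis unfolding adjQ_def corner_box[OF L x] avgQ_def b using sub by simp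
qed

lemma Qterm_box:
  fixes f :: "int^'d::finite \<Rightarrow> complex"
  assumes L: "L > 0" and sub: "unit_box L k p \<subseteq> S"
  shows "Re (\<Sum>x\<in>unit_box L k p. cnj (f x) * adjQ L k (avgQ L k S f) x)
     = (cmod (\<Sum>y\<in>unit_box L k p. f y))^2 / (real L ^ k) ^ CARD('d)"
proof -
  let ?B = "unit_box L k p" and ?c = "1 / real L ^ (k * CARD('d))"
  let ?T = "\<Sum>y\<in>?B. f y"
  have "(\<Sum>x\<in>?B. cnj (f x) * adjQ L k (avgQ L k S f) x) = (\<Sum>x\<in>?B. cnj (f x) * (complex_of_real ?c * ?T))"
    by (intro sum.cong refl) (simp only: adjQ_box[OF L sub])
  also have "\<dots> = (\<Sum>x\<in>?B. cnj (f x)) * (complex_of_real ?c * ?T)"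
    by (rule sum_distrib_right[symmetric])
  also have "(\<Sum>x\<in>?B. cnj (f x)) = cnj ?T" by (rule cnj_sum[symmetric])
  also have "cnj ?T * (complex_of_real ?c * ?T) = complex_of_real ?c * (cnj ?T * ?T)"
    by (rule mult.left_commute)
  also have "cnj ?T * ?T = complex_of_real ((cmod ?T)^2)"
    by (subst complex_norm_square) (rule mult.commute)
  finally have "Re (\<Sum>x\<in>?B. cnj (f x) * adjQ L k (avgQ L k S f) x) = ?c * (cmod ?T)^2"
    by simp
  also have "\<dots> = (cmod ?T)^2 / (real L ^ k) ^ CARD('d)" by (simp add: power_mult)
  finally show ?thesis .
qed

lemma poinc_box:
  fixes f :: "int^'d::finite \<Rightarrow> complex"
  assumes L: "L > 0"
  shows "(\<Sum>x\<in>unit_box L k p. (cmod (f x))^2)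
    \<le> (cmod (\<Sum>y\<in>unit_box L k p. f y))^2 / (real L ^ k) ^ CARD('d)
       + (4 ^ CARD('d) / 2) * (real L ^ k)^2 * En (unit_box L k p) f"
proof -
  let ?N = "int L ^ k" and ?B = "unit_box L k p"
  have N: "?N > 0" using L by simp
  have cB: "real (card ?B) = (real L ^ k) ^ CARD('d)"
    unfolding unit_box_eq card_ibox by simp
  have C: "(real L ^ k) ^ CARD('d) > 0" using L by simp
  let ?C = "(real L ^ k) ^ CARD('d)"
  let ?X = "\<Sum>x\<in>?B. (cmod (f x))^2" and ?Y = "(cmod (\<Sum>y\<in>?B. f y))^2" and ?E = "En ?B f"
  have "2 * real (card ?B) * ?X - 2 * ?Y \<le> 4 ^ CARD('d) * ((of_int ?N)^2 * real (card ?B) * ?E)"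
    unfolding unit_box_eq by (rule poincare[OF N])
  then have "2 * ?C * ?X - 2 * ?Y \<le> 4 ^ CARD('d) * ((real L ^ k)^2 * ?C * ?E)"
    unfolding cB by simp
  then have "?C * ?X \<le> ?Y + (4 ^ CARD('d) / 2) * (real L ^ k)^2 * ?E * ?C"
    by (simp add: algebra_simps)
  then have "?X \<le> (?Y + (4 ^ CARD('d) / 2) * (real L ^ k)^2 * ?E * ?C) / ?C"
    using C by (simp add: le_divide_eq mult.commute)
  also have "\<dots> = ?Y / ?C + (4 ^ CARD('d) / 2) * (real L ^ k)^2 * ?E"
    using C by (simp add: add_divide_distrib)
  finally show ?thesis .
qed

lemma core:
  fixes h w E X Yq mu ak a' K :: real
  assumes h: "h \<ge> 0" and w: "w \<ge> 0" and E: "E \<ge> 0" and X: "X \<ge> 0" and Yq: "Yq \<ge> 0"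
    and mu: "mu \<ge> 0" and ak: "ak \<ge> a'" and a0: "a' > 0" and a1: "a' \<le> 1" and K: "K \<ge> 0"
    and P: "X \<le> Yq + K * w * E"
  shows "a' / (1 + K) * (h * (w * E + X)) \<le> h * (w * E + mu * X + ak * Yq)"
proof -
  obtain c where cdef: "c = a' / (1 + K)" by simp
  have c0: "0 \<le> c" using a0 K cdef by simp
  have c1: "c * (1 + K) = a'" using K cdef by simp
  have cle: "c \<le> a'" using a0 K cdef by (simp add: divide_le_eq)
  have wE: "w * E \<ge> 0" using w E by simp
  have "c * (w * E + X) \<le> c * (w * E + Yq + K * w * E)"
    by (rule mult_left_mono) (use P c0 in linarith)+
  also have "\<dots> = (c * (1 + K)) * (w * E) + c * Yq" by (simp add: algebra_simps)
  also have "\<dots> = a' * (w * E) + c * Yq" by (simp only: c1)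
  also have "\<dots> \<le> w * E + ak * Yq"
  proof -
    have "a' * (w * E) \<le> 1 * (w * E)" by (rule mult_right_mono) (use a1 wE in auto)
    moreover have "c * Yq \<le> ak * Yq" by (rule mult_right_mono) (use cle ak Yq in auto)
    ultimately show ?thesis by simp
  qed
  also have "\<dots> \<le> w * E + mu * X + ak * Yq" using mu X by simp
  finally have "c * (w * E + X) \<le> w * E + mu * X + ak * Yq" .
  then have "h * (c * (w * E + X)) \<le> h * (w * E + mu * X + ak * Yq)"
    by (rule mult_left_mono) (rule h)
  then show ?thesis unfolding cdef[symmetric] by (simp add: ac_simps)
qed




lemma div_bounds:
  fixes x N M :: int
  assumes N: "N > 0"
  shows "(0 \<le> x \<and> x < N * M) \<longleftrightarrow> (0 \<le> x div N \<and> x div N < M)"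
proof -
  have d: "x = N * (x div N) + x mod N" by simp
  have m: "0 \<le> x mod N" "x mod N < N" using N by simp_all
  have nn: "0 \<le> x div N \<longleftrightarrow> 0 \<le> x" using N by (simp add: pos_imp_zdiv_nonneg_iff)
  show ?thesis
  proof
    assume h: "0 \<le> x \<and> x < N * M"
    have "x div N < M"
    proof (rule ccontr)
      assume "\<not> x div N < M"
      then have "M \<le> x div N" by simp
      then have "N * M \<le> N * (x div N)" using N by (intro mult_left_mono) auto
      then show False using h d m by linarith
    qed
    then show "0 \<le> x div N \<and> x div N < M" using h nn by simp
  next
    assume h: "0 \<le> x div N \<and> x div N < M"
    then have "x div N + 1 \<le> M" by simp
    then have "N * (x div N + 1) \<le> N * M" using N by (intro mult_left_mono) auto
    moreover have "N * (x div N + 1) = N * (x div N) + N" by (simp add: algebra_simps)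
    ultimately have "x < N * M" using d m by linarith
    then show "0 \<le> x \<and> x < N * M" using h nn by simp
  qed
qed

definition blk :: "nat \<Rightarrow> nat \<Rightarrow> int^'d::finite \<Rightarrow> int^'d" where
  "blk L k x = (\<chi> \<mu>. x$\<mu> div int L ^ k)"

lemma OmegaI_eq: "m \<ge> k \<Longrightarrow> OmegaI L m = ibox 0 (int L ^ k * int L ^ (m - k))"
  by (simp add: OmegaI_def flip: power_add)

lemma blk_in_P:
  assumes L: "L > 0" and mk: "m \<ge> k" and x: "x \<in> OmegaI L m"
  shows "blk L k x \<in> ibox (0::int^'d::finite) (int L ^ (m - k))"
proof -
  have N: "int L ^ k > 0" using L by simp
  have "0 \<le> x$\<mu> \<and> x$\<mu> < int L ^ k * int L ^ (m - k)" for \<mu>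
    using x unfolding OmegaI_eq[OF mk] by (simp add: ibox_def)
  then have "0 \<le> x$\<mu> div int L ^ k \<and> x$\<mu> div int L ^ k < int L ^ (m - k)" for \<mu>
    using div_bounds[OF N] by blast
  then show ?thesis by (simp add: ibox_def blk_def)
qed

lemma fiber_eq:
  assumes L: "L > 0" and mk: "m \<ge> k" and p: "p \<in> ibox (0::int^'d::finite) (int L ^ (m - k))"
  shows "{x \<in> OmegaI L m. blk L k x = p} = unit_box L k p"
proof -
  have N: "int L ^ k > 0" using L by simp
  have ub: "x \<in> unit_box L k p \<longleftrightarrow> blk L k x = p" for x :: "int^'d"
    unfolding unit_box_eq box_iff_div[OF N] by (simp add: blk_def vec_eq_iff)
  have p': "0 \<le> p$\<mu> \<and> p$\<mu> < int L ^ (m - k)" for \<mu> using p by (simp add: ibox_def)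
  have "x \<in> OmegaI L m" if "blk L k x = p" for x :: "int^'d"
  proof -
    have "x$\<mu> div int L ^ k = p$\<mu>" for \<mu> using that by (simp add: blk_def vec_eq_iff)
    then have "0 \<le> x$\<mu> \<and> x$\<mu> < int L ^ k * int L ^ (m - k)" for \<mu>
      using div_bounds[OF N] p' by metis
    then show ?thesis unfolding OmegaI_eq[OF mk] by (simp add: ibox_def)
  qed
  then show ?thesis using ub by blast
qed

lemma finite_OmegaI[simp]: "finite (OmegaI L m :: (int^'d::finite) set)"
  by (simp add: OmegaI_def)

lemma sum_group_Omega:
  fixes g :: "int^'d::finite \<Rightarrow> 'a::comm_monoid_add"
  assumes L: "L > 0" and mk: "m \<ge> k"
  shows "(\<Sum>x\<in>OmegaI L m. g x) = (\<Sum>p\<in>ibox (0::int^'d::finite) (int L ^ (m - k)). \<Sum>x\<in>unit_box L k p. g x)"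
proof -
  have "(\<Sum>p\<in>ibox (0::int^'d) (int L ^ (m - k)). sum g {x. x \<in> OmegaI L m \<and> blk L k x = p}) = sum g (OmegaI L m)"
    by (rule sum.group) (use blk_in_P[OF L mk] in auto)
  moreover have "(\<Sum>p\<in>ibox (0::int^'d) (int L ^ (m - k)). sum g {x. x \<in> OmegaI L m \<and> blk L k x = p})
      = (\<Sum>p\<in>ibox (0::int^'d) (int L ^ (m - k)). \<Sum>x\<in>unit_box L k p. g x)"
  proof (rule sum.cong[OF refl])
    fix p assume "p \<in> ibox (0::int^'d) (int L ^ (m - k))"
    then have "{x. x \<in> OmegaI L m \<and> blk L k x = p} = unit_box L k p"
      by (rule fiber_eq[OF L mk])
    then show "sum g {x. x \<in> OmegaI L m \<and> blk L k x = p} = (\<Sum>x\<in>unit_box L k p. g x)" by simp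
  qed
  ultimately show ?thesis by simp
qed

lemma box_sub_Omega:
  assumes L: "L > 0" and mk: "m \<ge> k" and p: "p \<in> ibox (0::int^'d::finite) (int L ^ (m - k))"
  shows "unit_box L k p \<subseteq> OmegaI L m"
  using fiber_eq[OF L mk p] by blast

lemma hb_mono: "B \<subseteq> S \<Longrightarrow> hb B f j x \<le> hb S f j x"
  by (auto simp: hb_def)

lemma En_Omega:
  fixes f :: "int^'d::finite \<Rightarrow> complex"
  assumes L: "L > 0" and mk: "m \<ge> k"
  shows "(\<Sum>p\<in>ibox (0::int^'d) (int L ^ (m - k)). En (unit_box L k p) f) \<le> En (OmegaI L m) f"
proof -
  let ?P = "ibox (0::int^'d) (int L ^ (m - k))"
  have "(\<Sum>p\<in>?P. En (unit_box L k p) f) = (\<Sum>j\<in>UNIV. \<Sum>p\<in>?P. \<Sum>x\<in>unit_box L k p. hb (unit_box L k p) f j x)"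
    unfolding En_def by (rule sum.swap)
  also have "\<dots> \<le> (\<Sum>j\<in>UNIV. \<Sum>p\<in>?P. \<Sum>x\<in>unit_box L k p. hb (OmegaI L m) f j x)"
    by (intro sum_mono hb_mono box_sub_Omega[OF L mk])
  also have "\<dots> = En (OmegaI L m) f"
    unfolding En_def by (simp only: sum_group_Omega[OF L mk])
  finally show ?thesis .
qed




theorem mainTheorem2:
  fixes a :: real
  assumes "0 < a" and "a \<le> 1"
  shows "\<exists>c::real. c > 0 \<and>
    (\<forall>(L::nat) (k::nat) (m::nat) (\<mu>0::real).
       odd L \<and> L > 1 \<and> k \<ge> 1 \<and> m \<ge> k \<and> \<mu>0 \<ge> 0 \<longrightarrow>
       (let \<eta> = real L powi (- int k) in
        (\<forall>p::int^'d. (\<forall>\<mu>. 0 \<le> p$\<mu> \<and> p$\<mu> < int L ^ (m - k)) \<longrightarrow>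
           (\<forall>f. Re (lat_inner \<eta> (unit_box L k p) f (opA a \<mu>0 L k (unit_box L k p) f))
                 \<ge> c * Re (lat_inner \<eta> (unit_box L k p) f (opB L k (unit_box L k p) f))))
        \<and> (\<forall>f::int^'d \<Rightarrow> complex. Re (lat_inner \<eta> (OmegaI L m) f (opA a \<mu>0 L k (OmegaI L m) f))
                 \<ge> c * Re (lat_inner \<eta> (OmegaI L m) f (opB L k (OmegaI L m) f)))
        \<and> (\<forall>f::int^'d \<Rightarrow> complex. (\<forall>x\<in>OmegaI L m. opA a \<mu>0 L k (OmegaI L m) f x = 0)
               \<longrightarrow> (\<forall>x\<in>OmegaI L m. f x = 0))))"
proof -
  define K :: real where "K = 4 ^ CARD('d) / 2"
  define a' :: real where "a' = 8 * a / 9"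
  have K0: "K \<ge> 0" by (simp add: K_def)
  have a'0: "a' > 0" and a'1: "a' \<le> 1" using assms by (simp_all add: a'_def)
  define c where "c = a' / (1 + K)"
  have cpos: "c > 0" using a'0 K0 by (simp add: c_def)
  show ?thesis
  proof (intro exI[where x=c] conjI allI impI)
    show "c > 0" by (rule cpos)
    fix L k m :: nat and \<mu>0 :: real
    assume H: "odd L \<and> L > 1 \<and> k \<ge> 1 \<and> m \<ge> k \<and> \<mu>0 \<ge> 0"
    have L3: "L \<ge> 3" using H by (cases "L = 2") auto
    have L0: "L > 0" using L3 by simp
    have mk: "m \<ge> k" and k1: "k \<ge> 1" and mu0: "\<mu>0 \<ge> 0" using H by auto
    let ?\<eta> = "real L powi (- int k)"
    let ?w = "(real L ^ k)^2"
    let ?h = "?\<eta> ^ CARD('d)"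
    let ?C = "(real L ^ k) ^ CARD('d)"
    have w: "?\<eta> powi (-2) = ?w" by (rule eta_m2[OF L0])
    have h0: "?h > 0" using L0 by (simp add: eta_eq[OF L0])
    have ak: "a_seq a L k \<ge> a'" unfolding a'_def by (rule a_seq_lb[OF L3 k1 assms(1)])
    have mu: "mu_seq \<mu>0 L k \<ge> 0" by (rule mu_seq_nonneg[OF mu0])
    have C0: "?C > 0" using L0 by simp
    have part1: "Re (lat_inner ?\<eta> (unit_box L k p) f (opA a \<mu>0 L k (unit_box L k p) f))
                 \<ge> c * Re (lat_inner ?\<eta> (unit_box L k p) f (opB L k (unit_box L k p) f))"
      for p :: "int^'d" and f :: "int^'d \<Rightarrow> complex"
    proof -
      let ?B = "unit_box L k p"
      have fin: "finite ?B" by (simp add: unit_box_eq)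
      let ?X = "\<Sum>x\<in>?B. (cmod (f x))^2" and ?Yq = "(cmod (\<Sum>y\<in>?B. f y))^2 / ?C" and ?E = "En ?B f"
      have A: "Re (lat_inner ?\<eta> ?B f (opA a \<mu>0 L k ?B f)) = ?h * (?w * ?E + mu_seq \<mu>0 L k * ?X + a_seq a L k * ?Yq)"
        unfolding form_opA[OF fin] w Qterm_box[OF L0 subset_refl] ..
      have B: "Re (lat_inner ?\<eta> ?B f (opB L k ?B f)) = ?h * (?w * ?E + ?X)"
        unfolding form_opB[OF fin] w ..
      have P: "?X \<le> ?Yq + K * ?w * ?E"
        using poinc_box[OF L0, where k=k and p=p and f=f] unfolding K_def by simp
      have "c * (?h * (?w * ?E + ?X)) \<le> ?h * (?w * ?E + mu_seq \<mu>0 L k * ?X + a_seq a L k * ?Yq)"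
        unfolding c_def
        by (rule core[OF less_imp_le[OF h0] _ En_nonneg _ _ mu ak a'0 a'1 K0 P]) (simp_all add: sum_nonneg)
      then show ?thesis unfolding A B by simp
    qed
    let ?O = "OmegaI L m :: (int^'d) set"
    let ?P = "ibox (0::int^'d) (int L ^ (m - k))"
    have part2: "Re (lat_inner ?\<eta> ?O f (opA a \<mu>0 L k ?O f))
                 \<ge> c * Re (lat_inner ?\<eta> ?O f (opB L k ?O f))" for f :: "int^'d \<Rightarrow> complex"
    proof -
      let ?X = "\<Sum>x\<in>?O. (cmod (f x))^2" and ?E = "En ?O f"
      let ?Yq = "\<Sum>p\<in>?P. (cmod (\<Sum>y\<in>unit_box L k p. f y))^2 / ?C"
      have Q: "Re (\<Sum>x\<in>?O. cnj (f x) * adjQ L k (avgQ L k ?O f) x) = ?Yq"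
      proof -
        have "Re (\<Sum>x\<in>?O. cnj (f x) * adjQ L k (avgQ L k ?O f) x)
            = Re (\<Sum>p\<in>?P. \<Sum>x\<in>unit_box L k p. cnj (f x) * adjQ L k (avgQ L k ?O f) x)"
          by (simp only: sum_group_Omega[OF L0 mk])
        also have "\<dots> = (\<Sum>p\<in>?P. Re (\<Sum>x\<in>unit_box L k p. cnj (f x) * adjQ L k (avgQ L k ?O f) x))"
          by (rule Re_sum)
        also have "\<dots> = ?Yq"
          by (intro sum.cong refl Qterm_box[OF L0] box_sub_Omega[OF L0 mk])
        finally show ?thesis .
      qed
      have A: "Re (lat_inner ?\<eta> ?O f (opA a \<mu>0 L k ?O f)) = ?h * (?w * ?E + mu_seq \<mu>0 L k * ?X + a_seq a L k * ?Yq)"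
        unfolding form_opA[OF finite_OmegaI] w Q ..
      have B: "Re (lat_inner ?\<eta> ?O f (opB L k ?O f)) = ?h * (?w * ?E + ?X)"
        unfolding form_opB[OF finite_OmegaI] w ..
      have P: "?X \<le> ?Yq + K * ?w * ?E"
      proof -
        have "?X = (\<Sum>p\<in>?P. \<Sum>x\<in>unit_box L k p. (cmod (f x))^2)"
          by (rule sum_group_Omega[OF L0 mk])
        also have "\<dots> \<le> (\<Sum>p\<in>?P. (cmod (\<Sum>y\<in>unit_box L k p. f y))^2 / ?C + K * ?w * En (unit_box L k p) f)"
          by (intro sum_mono) (use poinc_box[OF L0] in \<open>simp add: K_def\<close>)
        also have "\<dots> = ?Yq + K * ?w * (\<Sum>p\<in>?P. En (unit_box L k p) f)"
          by (simp add: sum.distrib sum_distrib_left)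
        also have "\<dots> \<le> ?Yq + K * ?w * ?E"
          using En_Omega[OF L0 mk, of f] K0 by (simp add: mult_left_mono)
        finally show ?thesis .
      qed
      have "c * (?h * (?w * ?E + ?X)) \<le> ?h * (?w * ?E + mu_seq \<mu>0 L k * ?X + a_seq a L k * ?Yq)"
        unfolding c_def
        by (rule core[OF less_imp_le[OF h0] _ En_nonneg _ _ mu ak a'0 a'1 K0 P]) (simp_all add: sum_nonneg)
      then show ?thesis unfolding A B by simp
    qed
    have part3: "\<forall>x\<in>?O. f x = 0" if z: "\<forall>x\<in>?O. opA a \<mu>0 L k ?O f x = 0" for f :: "int^'d \<Rightarrow> complex"
    proof -
      let ?X = "\<Sum>x\<in>?O. (cmod (f x))^2" and ?E = "En ?O f"
      have "lat_inner ?\<eta> ?O f (opA a \<mu>0 L k ?O f) = 0"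
        unfolding lat_inner_def using z by simp
      then have "c * Re (lat_inner ?\<eta> ?O f (opB L k ?O f)) \<le> 0" using part2[of f] by simp
      moreover have "Re (lat_inner ?\<eta> ?O f (opB L k ?O f)) = ?h * (?w * ?E + ?X)"
        unfolding form_opB[OF finite_OmegaI] w ..
      ultimately have "c * (?h * (?w * ?E + ?X)) \<le> 0" by simp
      then have "?h * (?w * ?E + ?X) \<le> 0" using cpos by (simp add: mult_le_0_iff)
      then have "?w * ?E + ?X \<le> 0" using h0 by (simp add: mult_le_0_iff)
      moreover have "?w * ?E \<ge> 0" using En_nonneg[of ?O f] by simp
      moreover have "?X \<ge> 0" by (simp add: sum_nonneg)
      ultimately have "?X = 0" by linarith
      then have "\<forall>x\<in>?O. (cmod (f x))^2 = 0" by (subst (asm) sum_nonneg_eq_0_iff) auto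
      then show ?thesis by simp
    qed
    show "let \<eta> = real L powi (- int k) in
        (\<forall>p::int^'d. (\<forall>\<mu>. 0 \<le> p$\<mu> \<and> p$\<mu> < int L ^ (m - k)) \<longrightarrow>
           (\<forall>f. Re (lat_inner \<eta> (unit_box L k p) f (opA a \<mu>0 L k (unit_box L k p) f))
                 \<ge> c * Re (lat_inner \<eta> (unit_box L k p) f (opB L k (unit_box L k p) f))))
        \<and> (\<forall>f::int^'d \<Rightarrow> complex. Re (lat_inner \<eta> (OmegaI L m) f (opA a \<mu>0 L k (OmegaI L m) f))
                 \<ge> c * Re (lat_inner \<eta> (OmegaI L m) f (opB L k (OmegaI L m) f)))
        \<and> (\<forall>f::int^'d \<Rightarrow> complex. (\<forall>x\<in>OmegaI L m. opA a \<mu>0 L k (OmegaI L m) f x = 0)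
               \<longrightarrow> (\<forall>x\<in>OmegaI L m. f x = 0))"
      unfolding Let_def using part1 part2 part3 by blast
  qed
qed


end
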